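(* For $\alpha>1$, integers $k\ge1$ and $n\ge0$, $$\sum_{i=1}^n\ \sum_{k_1+k_2=k}\frac{1}{(10n+10.3-10i)^2\,(10i+0.3)^2}\cdot\frac{k!}{k_1!\,k_2!}\,(k_1+3(n+1-i))^{\alpha(k_1+3(n+1-i))}\,(k_2+3i)^{\alpha(k_2+3i)}$$ $$\le\ \frac{0.05\cdot 4^{-(\alpha-3/2)}}{1-4^{-(\alpha-1)}}\cdot\frac{(k+3(n+1))^{\alpha(k+3(n+1))}}{(10n+10.3)^2},$$ where the inner sum is over nonnegative integers $k_1,k_2$.
   Context: Convention $0^0=1$; an empty sum (when $n=0$) is $0$. *)

theory Defs
  imports Complex_Main
begin

end

theory Submission imports Defs begin
lemma choose_ge: "0 < j \<Longrightarrow> j < m \<Longrightarrow> m \<le> m choose j"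
proof (induction m arbitrary: j)
  case 0 then show ?case by simp
next
  case (Suc m)
  then obtain j' where j: "j = Suc j'" by (cases j) auto
  show ?case
  proof (cases "j' = 0")
    case True then show ?thesis using j by simp
  next
    case False
    then have "m \<le> m choose j'" using Suc j by simp
    moreover have "1 \<le> m choose j" using Suc j by (simp add: Suc_leI)
    ultimately show ?thesis using j by simp
  qed
qed

lemma vand: "k1 \<le> k \<Longrightarrow> (k choose k1) * (c choose a) \<le> (k + c) choose (k1 + a)"
proof -
  assume h: "k1 \<le> k"
  have "(k choose k1) * (c choose (k1 + a - k1)) \<le> (\<Sum>j\<le>k1+a. (k choose j) * (c choose (k1 + a - j)))"
    by (rule member_le_sum) auto
  then show ?thesis by (simp add: vandermonde)
qed

lemma binpow: "A \<le> N \<Longrightarrow> (N choose A) * A^A * B^(N-A) \<le> ((A+B)^N :: nat)"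
proof -
  assume h: "A \<le> N"
  have "(N choose A) * A^A * B^(N-A) \<le> (\<Sum>j\<le>N. (N choose j) * A^j * B^(N-j))"
    by (rule member_le_sum[where f="\<lambda>j. (N choose j) * A^j * B^(N-j)"]) (use h in auto)
  then show ?thesis by (simp add: binomial_ring)
qed

lemma twopow: "2^(min A B) * A^A * B^B \<le> ((A+B)^(A+B) :: nat)"
proof -
  have *: "2^A * A^A * B^B \<le> ((A+B)^(A+B) :: nat)" if "A \<le> B" for A B :: nat
  proof -
    have "2^A * A^A = (2*A)^A" by (simp add: power_mult_distrib)
    also have "\<dots> \<le> (A+B)^A" using that by (intro power_mono) auto
    finally have "2^A * A^A * B^B \<le> (A+B)^A * (A+B)^B"
      by (intro mult_mono power_mono) auto
    then show ?thesis by (simp add: power_add)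
  qed
  show ?thesis
  proof (cases "A \<le> B")
    case True then show ?thesis using *[OF True] by simp
  next
    case False then show ?thesis using *[of B A] by (simp add: add.commute mult.commute mult.left_commute)
  qed
qed
lemma pw: "0 < x \<Longrightarrow> x powr (\<alpha> * real n) = (x ^ n) powr \<alpha>"
  by (simp add: powr_powr powr_realpow[symmetric] mult.commute)

lemma realkey:
  fixes \<alpha> :: real and A B c g :: nat
  assumes a: "\<alpha> > 1" and A: "A \<ge> 1" and B: "B \<ge> 1" and g: "g \<ge> 1"
    and h1: "c*g*A^A*B^B \<le> (A+B)^(A+B)" and h2: "2^(min A B)*A^A*B^B \<le> (A+B)^(A+B)"
  shows "real c * real A powr (\<alpha>*real A) * real B powr (\<alpha>*real B)
     \<le> real (A+B) powr (\<alpha> * real (A+B)) * (2 powr (-(\<alpha>-1)))^(min A B) / real g"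
proof -
  define t where "t = \<alpha> - 1"
  have t: "t > 0" using a t_def by simp
  define P where "P = real A ^ A"
  define Q where "Q = real B ^ B"
  define R where "R = real (A+B) ^ (A+B)"
  define m where "m = min A B"
  have P: "P > 0" using A P_def by simp
  have Q: "Q > 0" using B Q_def by simp
  have R: "R > 0" using A R_def by simp
  have e1: "real A powr (\<alpha>*real A) = P powr \<alpha>" using A pw P_def by simp
  have e2: "real B powr (\<alpha>*real B) = Q powr \<alpha>" using B pw Q_def by simp
  have e3: "real (A+B) powr (\<alpha>*real (A+B)) = R powr \<alpha>" unfolding R_def by (rule pw) (use A in simp)
  have al: "\<alpha> = 1 + t" using t_def by simp
  have H1: "real c * real g * P * Q \<le> R"
  proof -
    have "real (c*g*A^A*B^B) \<le> real ((A+B)^(A+B))" using h1 by (rule of_nat_mono)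
    then show ?thesis unfolding P_def Q_def R_def by simp
  qed
  have H2: "2^m * P * Q \<le> R"
  proof -
    have "real (2^(min A B)*A^A*B^B) \<le> real ((A+B)^(A+B))" using h2 by (rule of_nat_mono)
    then show ?thesis unfolding P_def Q_def R_def m_def by simp
  qed
  have H1': "real c * P * Q \<le> R / real g" using H1 g by (simp add: field_simps)
  have H2': "P * Q \<le> R / 2^m" using H2 by (simp add: field_simps)
  have "(P*Q) powr t \<le> (R / 2^m) powr t"
    using H2' P Q t by (intro powr_mono2) auto
  also have "\<dots> = R powr t * (2 powr (-t))^m"
  proof -
    have "(R / 2^m) powr t = R powr t / (2^m) powr t" by (rule powr_divide)
    moreover have "(2::real)^m = 2 powr (real m)" by (simp add: powr_realpow)
    moreover have "(2 powr (-t))^m = 2 powr (real m * (-t))" by (rule powr_power) simp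
    ultimately show ?thesis by (simp add: powr_powr powr_minus divide_inverse mult.commute)
  qed
  finally have H3: "(P*Q) powr t \<le> R powr t * (2 powr (-t))^m" .
  have "real c * P powr \<alpha> * Q powr \<alpha> = (real c * P * Q) * (P*Q) powr t"
    using P Q by (simp add: al powr_add powr_mult)
  also have "\<dots> \<le> (R / real g) * (R powr t * (2 powr (-t))^m)"
    using H1' H3 P Q R by (intro mult_mono) auto
  also have "\<dots> = R powr \<alpha> * (2 powr (-t))^m / real g"
    using R by (simp add: al powr_add)
  finally show ?thesis using e1 e2 e3 t_def m_def by simp
qed
lemma geo: "0 \<le> (y::real) \<Longrightarrow> y < 1 \<Longrightarrow> (\<Sum>k1=0..k. y^(k1+a)) \<le> y^a/(1-y)"
proof -
  assume y: "0 \<le> y" "y < 1"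
  have "(\<Sum>k1=0..k. y^(k1+a)) = y^a * (\<Sum>k1\<le>k. y^k1)"
    by (simp add: atLeast0AtMost sum_distrib_left power_add mult.commute)
  also have "\<dots> = y^a * ((1 - y^Suc k)/(1-y))" using y by (simp add: sum_gp0)
  also have "\<dots> \<le> y^a * (1/(1-y))" using y
    by (intro mult_left_mono divide_right_mono) auto
  finally show ?thesis by simp
qed

lemma geo2: "0 \<le> (y::real) \<Longrightarrow> y < 1 \<Longrightarrow> (\<Sum>k1=0..k. y^(k-k1+b)) \<le> y^b/(1-y)"
proof -
  assume y: "0 \<le> y" "y < 1"
  have "(\<Sum>k1=0..k. y^(k-k1+b)) = (\<Sum>k1=0..k. y^(k1+b))"
    by (subst sum.atLeastAtMost_rev) simp
  then show ?thesis using geo[OF y] by simp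
qed

lemma geo3: assumes "0 \<le> (y::real)" "y < 1" "a \<ge> 3" "b \<ge> 3"
  shows "(\<Sum>k1=0..k. y^(k1+a) + y^(k-k1+b)) \<le> 4*y^2/(1-y^2)"
proof -
  have "y^a \<le> y^3" using assms by (intro power_decreasing) auto
  moreover have "y^b \<le> y^3" using assms by (intro power_decreasing) auto
  moreover have "y^3 \<le> y^2" using assms by (intro power_decreasing) auto
  ultimately have h: "y^a/(1-y) + y^b/(1-y) \<le> 2*y^2/(1-y)"
  proof -
    have "y^a/(1-y) + y^b/(1-y) = (y^a + y^b)/(1-y)" by (simp add: add_divide_distrib)
    also have "\<dots> \<le> (2*y^2)/(1-y)" using \<open>y^a \<le> y^3\<close> \<open>y^b \<le> y^3\<close> \<open>y^3 \<le> y^2\<close> assms(2)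
      by (intro divide_right_mono) auto
    finally show ?thesis .
  qed
  have "(\<Sum>k1=0..k. y^(k1+a) + y^(k-k1+b)) = (\<Sum>k1=0..k. y^(k1+a)) + (\<Sum>k1=0..k. y^(k-k1+b))"
    by (rule sum.distrib)
  also have "\<dots> \<le> y^a/(1-y) + y^b/(1-y)"
    by (intro add_mono geo geo2) (use assms in auto)
  finally have "(\<Sum>k1=0..k. y^(k1+a) + y^(k-k1+b)) \<le> 2*y^2/(1-y)" using h by linarith
  also have "\<dots> = 2*y^2*(1+y)/(1-y^2)"
  proof -
    have d: "1 - y^2 = (1-y)*(1+y)" by (simp add: power2_eq_square algebra_simps)
    have "1 + y \<noteq> 0" "1 - y \<noteq> 0" using assms by auto
    then have "2*y^2*(1+y)/((1-y)*(1+y)) = 2*y^2/(1-y)" by simp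
    then show ?thesis by (simp only: d)
  qed
  also have "\<dots> \<le> 4*y^2/(1-y^2)"
  proof -
    have "y^2*(1+y) \<le> y^2*2" using assms by (intro mult_left_mono) auto
    moreover have "0 \<le> 1 - y^2" using assms by (simp add: power_le_one)
    ultimately show ?thesis by (intro divide_right_mono) (auto simp: mult.commute)
  qed
  finally show ?thesis .
qed

lemma termb:
  fixes \<alpha> :: real and k k1 a b :: nat
  assumes al: "\<alpha> > 1" and kk: "k1 \<le> k" and a: "a \<ge> 1" and b: "b \<ge> 1"
  shows "real (k choose k1) * (real k1 + 3*real a) powr (\<alpha>*(real k1 + 3*real a))
          * (real (k-k1) + 3*real b) powr (\<alpha>*(real (k-k1) + 3*real b))
     \<le> (real k + 3*real (a+b)) powr (\<alpha>*(real k + 3*real (a+b)))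
          * ((2 powr (-(\<alpha>-1)))^(k1+3*a) + (2 powr (-(\<alpha>-1)))^(k-k1+3*b)) / real (3*(a+b))"
proof -
  define A where "A = k1 + 3*a"
  define B where "B = k - k1 + 3*b"
  define c where "c = k choose k1"
  define g where "g = (3*a+3*b) choose (3*a)"
  define y :: real where "y = 2 powr (-(\<alpha>-1))"
  have y0: "y \<ge> 0" unfolding y_def by simp
  have AB: "A + B = k + (3*a+3*b)" using kk unfolding A_def B_def by simp
  have "c*g \<le> (k + (3*a+3*b)) choose (k1 + 3*a)" unfolding c_def g_def by (rule vand[OF kk])
  moreover have "(A+B) choose A = (k+(3*a+3*b)) choose (k1+3*a)" by (subst AB) (simp add: A_def)
  ultimately have cg: "c*g \<le> (A+B) choose A" by simp
  have "c*g*A^A*B^B \<le> ((A+B) choose A)*A^A*B^B" using cg by (intro mult_right_mono) auto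
  also have "\<dots> \<le> (A+B)^(A+B)" using binpow[of A "A+B" B] by simp
  finally have h1: "c*g*A^A*B^B \<le> (A+B)^(A+B)" .
  have gge: "3*a+3*b \<le> g" unfolding g_def using a b by (intro choose_ge) auto
  then have g1: "g \<ge> 1" using a by simp
  have rk: "real c * real A powr (\<alpha>*real A) * real B powr (\<alpha>*real B)
     \<le> real (A+B) powr (\<alpha> * real (A+B)) * y^(min A B) / real g"
    unfolding y_def using al h1 twopow[of A B] g1 a b unfolding A_def B_def
    by (intro realkey) auto
  have Z0: "real (A+B) powr (\<alpha> * real (A+B)) \<ge> 0" by simp
  have "y^(min A B) \<le> y^A + y^B" using y0 by (cases "A \<le> B") (auto simp: min_def)
  then have "real (A+B) powr (\<alpha> * real (A+B)) * y^(min A B) / real g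
      \<le> real (A+B) powr (\<alpha> * real (A+B)) * (y^A + y^B) / real g"
    using Z0 g1 by (intro divide_right_mono mult_left_mono) auto
  also have "\<dots> \<le> real (A+B) powr (\<alpha> * real (A+B)) * (y^A + y^B) / real (3*a+3*b)"
    using Z0 y0 gge a by (intro divide_left_mono mult_nonneg_nonneg) auto
  finally have fin: "real c * real A powr (\<alpha>*real A) * real B powr (\<alpha>*real B)
      \<le> real (A+B) powr (\<alpha> * real (A+B)) * (y^A + y^B) / real (3*a+3*b)" using rk by linarith
  have e1: "real A = real k1 + 3*real a" unfolding A_def by simp
  have e2: "real B = real (k-k1) + 3*real b" unfolding B_def by simp
  have e3: "real (A+B) = real k + 3*real (a+b)" using AB by simp
  have e4: "3*a+3*b = 3*(a+b)" by simp
  from fin have "real c * (real k1 + 3*real a) powr (\<alpha>*(real k1 + 3*real a))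
          * (real (k-k1) + 3*real b) powr (\<alpha>*(real (k-k1) + 3*real b))
      \<le> (real k + 3*real (a+b)) powr (\<alpha> * (real k + 3*real (a+b))) * (y^A + y^B) / real (3*(a+b))"
    unfolding e1 e2 e3 e4 .
  then show ?thesis unfolding c_def y_def A_def B_def .
qed

lemma weight:
  fixes n i :: nat assumes "1 \<le> i" "i \<le> n"
  shows "1 / ((10 * real n + 10.3 - 10 * real i)^2 * (10 * real i + 0.3)^2) \<le> 0.038 / (10 * real n + 10.3)^2"
proof -
  define p :: real where "p = 10 * real i + 0.3"
  define q :: real where "q = 10 * real n + 10.3 - 10 * real i"
  define M :: real where "M = 10 * real n + 10.3"
  have p: "p \<ge> 10.3" using assms p_def by simp
  have q: "q \<ge> 10.3" using assms q_def by simp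
  have M: "M > 0" "M \<le> p + q" using p_def q_def M_def by auto
  have "M/(p*q) \<le> (p+q)/(p*q)" using M p q by (intro divide_right_mono) auto
  also have "\<dots> = 1/p + 1/q" using p q by (simp add: field_simps)
  also have "\<dots> \<le> 1/10.3 + 1/10.3" using p q by (intro add_mono divide_left_mono) auto
  finally have h: "M/(p*q) \<le> 2/10.3" by simp
  have "(M/(p*q))^2 \<le> (2/10.3)^2" using h M p q by (intro power_mono) auto
  also have "\<dots> \<le> 0.038" by (simp add: power2_eq_square)
  finally have "(M/(p*q))^2 \<le> 0.038" .
  then have "M^2 / (q^2 * p^2) \<le> 0.038" by (simp add: power_divide power_mult_distrib mult.commute)
  then have "1 / (q^2 * p^2) \<le> 0.038 / M^2" using M p q by (simp add: field_simps)
  then show ?thesis unfolding p_def q_def M_def .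
qed

lemma inner:
  fixes \<alpha> :: real and k n i :: nat
  assumes al: "\<alpha> > 1" and i1: "1 \<le> i" and iN: "i \<le> n"
  shows "(\<Sum>k1 = 0..k.
            1 / ((10 * real n + 10.3 - 10 * real i)^2 * (10 * real i + 0.3)^2)
            * (fact k / (fact k1 * fact (k - k1)))
            * (real k1 + 3 * real (n + 1 - i)) powr (\<alpha> * (real k1 + 3 * real (n + 1 - i)))
            * (real (k - k1) + 3 * real i) powr (\<alpha> * (real (k - k1) + 3 * real i)))
     \<le> 0.038 / (10 * real n + 10.3)^2
        * (real k + 3 * real (n + 1)) powr (\<alpha> * (real k + 3 * real (n + 1)))
        * (4 * (2 powr (-(\<alpha>-1)))^2 / (1 - (2 powr (-(\<alpha>-1)))^2)) / (3 * (real n + 1))"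
proof -
  define y :: real where "y = 2 powr (-(\<alpha>-1))"
  define w :: real where "w = 1 / ((10 * real n + 10.3 - 10 * real i)^2 * (10 * real i + 0.3)^2)"
  define Z :: real where "Z = (real k + 3 * real (n + 1)) powr (\<alpha> * (real k + 3 * real (n + 1)))"
  define D :: real where "D = 3 * (real n + 1)"
  have y0: "0 \<le> y" unfolding y_def by simp
  have y1: "y < 1" unfolding y_def using al
    by (metis neg_less_0_iff_less diff_gt_0_iff_gt powr_less_cancel_iff powr_zero_eq_one one_less_numeral_iff semiring_norm(76) zero_neq_numeral)
  have w0: "w \<ge> 0" unfolding w_def by simp
  have Z0: "Z \<ge> 0" unfolding Z_def by simp
  have D0: "D > 0" unfolding D_def by simp
  have ab: "n + 1 - i + i = n + 1" using iN by simp
  have tm: "1 / ((10 * real n + 10.3 - 10 * real i)^2 * (10 * real i + 0.3)^2)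
            * (fact k / (fact k1 * fact (k - k1)))
            * (real k1 + 3 * real (n + 1 - i)) powr (\<alpha> * (real k1 + 3 * real (n + 1 - i)))
            * (real (k - k1) + 3 * real i) powr (\<alpha> * (real (k - k1) + 3 * real i))
       \<le> w * Z / D * (y^(k1 + 3*(n+1-i)) + y^(k-k1+3*i))" if k1: "k1 \<in> {0..k}" for k1
  proof -
    have kk: "k1 \<le> k" using k1 by simp
    have tb: "real (k choose k1) * (real k1 + 3*real (n+1-i)) powr (\<alpha>*(real k1 + 3*real (n+1-i)))
          * (real (k-k1) + 3*real i) powr (\<alpha>*(real (k-k1) + 3*real i))
     \<le> Z * (y^(k1 + 3*(n+1-i)) + y^(k-k1+3*i)) / D"
    proof -
      have a1: "1 \<le> n+1-i" using iN by simp
      have eqD: "real (3*(n+1)) = D" unfolding D_def by simp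
      show ?thesis using termb[OF al kk a1 i1] unfolding ab eqD Z_def[symmetric] y_def[symmetric] .
    qed
    have "1 / ((10 * real n + 10.3 - 10 * real i)^2 * (10 * real i + 0.3)^2)
            * (fact k / (fact k1 * fact (k - k1)))
            * (real k1 + 3 * real (n + 1 - i)) powr (\<alpha> * (real k1 + 3 * real (n + 1 - i)))
            * (real (k - k1) + 3 * real i) powr (\<alpha> * (real (k - k1) + 3 * real i))
        = w * (real (k choose k1) * (real k1 + 3*real (n+1-i)) powr (\<alpha>*(real k1 + 3*real (n+1-i)))
          * (real (k-k1) + 3*real i) powr (\<alpha>*(real (k-k1) + 3*real i)))"
      unfolding w_def binomial_fact[OF kk] by (simp only: mult.assoc)
    also have "\<dots> \<le> w * (Z * (y^(k1 + 3*(n+1-i)) + y^(k-k1+3*i)) / D)"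
      using tb w0 by (rule mult_left_mono)
    finally show ?thesis by simp
  qed
  have "(\<Sum>k1 = 0..k.
            1 / ((10 * real n + 10.3 - 10 * real i)^2 * (10 * real i + 0.3)^2)
            * (fact k / (fact k1 * fact (k - k1)))
            * (real k1 + 3 * real (n + 1 - i)) powr (\<alpha> * (real k1 + 3 * real (n + 1 - i)))
            * (real (k - k1) + 3 * real i) powr (\<alpha> * (real (k - k1) + 3 * real i)))
     \<le> (\<Sum>k1 = 0..k. w * Z / D * (y^(k1 + 3*(n+1-i)) + y^(k-k1+3*i)))"
    by (rule sum_mono) (rule tm)
  also have "\<dots> = w * Z / D * (\<Sum>k1 = 0..k. y^(k1 + 3*(n+1-i)) + y^(k-k1+3*i))"
    by (simp add: sum_distrib_left)
  also have "\<dots> \<le> w * Z / D * (4*y^2/(1-y^2))"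
    using w0 Z0 D0 iN i1 y0 y1 by (intro mult_left_mono geo3) auto
  also have "\<dots> \<le> 0.038 / (10 * real n + 10.3)^2 * Z / D * (4*y^2/(1-y^2))"
  proof -
    have "w \<le> 0.038 / (10 * real n + 10.3)^2" unfolding w_def by (rule weight[OF i1 iN])
    moreover have "0 \<le> 4*y^2/(1-y^2)" using y0 y1 by (simp add: power_le_one)
    ultimately show ?thesis using Z0 D0 by (intro mult_right_mono divide_right_mono) auto
  qed
  also have "\<dots> = 0.038 / (10 * real n + 10.3)^2 * Z * (4*y^2/(1-y^2)) / D" by simp
  finally show ?thesis unfolding y_def[symmetric] Z_def[symmetric] D_def[symmetric] .
qed

lemma a1: "0.038 / M * Z * (4 * x / (1 - x)) = 0.152 * (x / (1 - x) * (Z / (M::real)))"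
  by (simp add: divide_simps)

lemma a2: "(K::real) \<ge> 0 \<Longrightarrow> real n * (0.152 * K / (3 * (real n + 1))) \<le> 0.1 * K"
proof -
  assume K: "K \<ge> 0"
  have "real n * (0.152 * K / (3 * (real n + 1))) = (0.152 * real n / (3 * (real n + 1))) * K" by simp
  also have "\<dots> \<le> 0.1 * K" using K by (intro mult_right_mono) (simp_all add: divide_le_eq)
  finally show ?thesis .
qed

lemma arith2: "0.05*(2*x)/(1-x) = 0.1*(x/(1-x::real))"
  by simp

lemma arith3: "x = 4 powr (-(\<alpha>-1)) \<Longrightarrow> 4 powr (-(\<alpha> - 3/2)) = 2*x \<Longrightarrow>
  0.05 * 4 powr (-(\<alpha> - 3/2)) / (1 - 4 powr (-(\<alpha> - 1))) = 0.05*(2*x)/(1-(x::real))"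
  by simp

theorem corollaryA3:
  fixes \<alpha> :: real and k n :: nat
  assumes "\<alpha> > 1" and "k \<ge> 1"
  shows "(\<Sum>i = 1..n. \<Sum>k1 = 0..k.
            1 / ((10 * real n + 10.3 - 10 * real i)^2 * (10 * real i + 0.3)^2)
            * (fact k / (fact k1 * fact (k - k1)))
            * (real k1 + 3 * real (n + 1 - i)) powr (\<alpha> * (real k1 + 3 * real (n + 1 - i)))
            * (real (k - k1) + 3 * real i) powr (\<alpha> * (real (k - k1) + 3 * real i)))
         \<le> (0.05 * 4 powr (-(\<alpha> - 3/2)) / (1 - 4 powr (-(\<alpha> - 1))))
            * ((real k + 3 * real (n + 1)) powr (\<alpha> * (real k + 3 * real (n + 1)))
               / (10 * real n + 10.3)^2)"
proof -
  define y :: real where "y = 2 powr (-(\<alpha>-1))"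
  define x :: real where "x = 4 powr (-(\<alpha>-1))"
  define M :: real where "M = (10 * real n + 10.3)^2"
  define Z :: real where "Z = (real k + 3 * real (n + 1)) powr (\<alpha> * (real k + 3 * real (n + 1)))"
  have y0: "0 \<le> y" unfolding y_def by simp
  have y1: "y < 1" unfolding y_def using assms(1)
    by (metis neg_less_0_iff_less diff_gt_0_iff_gt powr_less_cancel_iff powr_zero_eq_one one_less_numeral_iff semiring_norm(76) zero_neq_numeral)
  have xy: "x = y^2"
  proof -
    have "x = (2*2) powr (-(\<alpha>-1))" unfolding x_def by simp
    also have "\<dots> = y * y" unfolding y_def by (rule powr_mult)
    finally show ?thesis by (simp add: power2_eq_square)
  qed
  have "y^2 < 1^2" using y0 y1 by (intro power_strict_mono) auto
  then have x0: "0 \<le> x" "x < 1" using xy by auto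
  have M0: "M > 0" unfolding M_def by simp
  have Z0: "Z \<ge> 0" unfolding Z_def by simp
  have four: "4 powr (-(\<alpha> - 3/2)) = 2 * x"
  proof -
    have "4 powr (-(\<alpha> - 3/2)) = 4 powr (1/2 + (-(\<alpha>-1)))" by simp
    also have "\<dots> = 4 powr (1/2) * x" unfolding x_def by (rule powr_add)
    also have "(4::real) powr (1/2) = 2"
      by (metis powr_half_sqrt real_sqrt_four zero_le_numeral)
    finally show ?thesis by simp
  qed
  define K :: real where "K = x / (1 - x) * (Z / M)"
  have K0: "K \<ge> 0" unfolding K_def using x0 Z0 M0 by simp
  define C :: real where "C = 0.152 * K / (3 * (real n + 1))"
  have CK: "C = 0.038 / M * Z * (4 * x / (1 - x)) / (3 * (real n + 1))"
    unfolding C_def K_def a1 by (rule refl)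
  have Ceq: "C = 0.038 / (10 * real n + 10.3)^2
        * (real k + 3 * real (n + 1)) powr (\<alpha> * (real k + 3 * real (n + 1)))
        * (4 * (2 powr (-(\<alpha>-1)))^2 / (1 - (2 powr (-(\<alpha>-1)))^2)) / (3 * (real n + 1))"
    unfolding CK M_def Z_def xy y_def by (rule refl)
  have h1: "(\<Sum>i = 1..n. \<Sum>k1 = 0..k.
            1 / ((10 * real n + 10.3 - 10 * real i)^2 * (10 * real i + 0.3)^2)
            * (fact k / (fact k1 * fact (k - k1)))
            * (real k1 + 3 * real (n + 1 - i)) powr (\<alpha> * (real k1 + 3 * real (n + 1 - i)))
            * (real (k - k1) + 3 * real i) powr (\<alpha> * (real (k - k1) + 3 * real i)))
        \<le> (\<Sum>i = 1..n. C)"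
  proof (rule sum_mono)
    fix i assume i: "i \<in> {1..n}"
    have i1: "1 \<le> i" and iN: "i \<le> n" using i by auto
    show "(\<Sum>k1 = 0..k.
            1 / ((10 * real n + 10.3 - 10 * real i)^2 * (10 * real i + 0.3)^2)
            * (fact k / (fact k1 * fact (k - k1)))
            * (real k1 + 3 * real (n + 1 - i)) powr (\<alpha> * (real k1 + 3 * real (n + 1 - i)))
            * (real (k - k1) + 3 * real i) powr (\<alpha> * (real (k - k1) + 3 * real i))) \<le> C"
      unfolding Ceq by (rule inner[OF assms(1) i1 iN])
  qed
  have h2: "(\<Sum>i = 1..n. C) = real n * C" by (simp only: sum_constant card_atLeastAtMost) simp
  have h3: "real n * C \<le> 0.1 * K" unfolding C_def by (rule a2[OF K0])
  have e: "0.05 * 4 powr (-(\<alpha> - 3/2)) / (1 - 4 powr (-(\<alpha> - 1))) = 0.05*(2*x)/(1-x)"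
    by (rule arith3[OF x_def four])
  have h4: "0.1 * K = (0.05 * 4 powr (-(\<alpha> - 3/2)) / (1 - 4 powr (-(\<alpha> - 1))))
            * ((real k + 3 * real (n + 1)) powr (\<alpha> * (real k + 3 * real (n + 1)))
               / (10 * real n + 10.3)^2)"
    unfolding K_def e arith2 Z_def M_def by (simp only: mult.assoc)
  show ?thesis by (rule order_trans[OF h1[unfolded h2] ord_le_eq_trans[OF h3 h4]])
qed

end
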